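(* Let $S\subset\mathbb{R}^n$ be a polyhedron and $U_0=\{A\in\mathbb{R}^{n\times n}\mid \mathrm{Tr}(V_j^TA)\le v_j,\ j=1,\dots,s\}$ a polyhedron of matrices, and let $S_0^\infty=\{x\in S\mid A^tx\in S\ \text{for all } A\in U_0 \text{ and all integers } t\ge1\}$. Suppose that $S$ is compact and $S_0^\infty$ is full-dimensional. Then $U_0$ is bounded and every matrix in $U_0$ has spectral radius less than or equal to one.
   Context: Full-dimensional means having nonempty interior. The spectral radius of a square matrix is the maximum modulus of its eigenvalues. *)

theory Defs
  imports "HOL-Analysis.Analysis"
begin

primrec matpow :: "real^'n^'n \<Rightarrow> nat \<Rightarrow> real^'n^'n" where
  "matpow A 0 = mat 1"
| "matpow A (Suc k) = A ** matpow A k"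

definition complexify :: "real^'n^'n \<Rightarrow> complex^'n^'n" where
  "complexify A = (\<chi> i j. complex_of_real (A $ i $ j))"

definition eigenvalues_c :: "real^'n^'n \<Rightarrow> complex set" where
  "eigenvalues_c A = {c. \<exists>x::complex^'n. x \<noteq> 0 \<and> complexify A *v x = c *s x}"

definition spectral_radius_r :: "real^'n^'n \<Rightarrow> real" where
  "spectral_radius_r A = Max (cmod ` eigenvalues_c A)"

end

theory Submission imports Defs "HOL-Computational_Algebra.Polynomial" "HOL-Computational_Algebra.Fundamental_Theorem_Algebra" begin

definition cpm :: "complex^'n^'n \<Rightarrow> complex poly^'n^'n" where
  "cpm B = (\<chi> i j. [:B $ i $ j:] - (if i = j then [:0,1:] else 0))"

lemma poly_det_cpm: "poly (det (cpm B)) c = det (B - mat c)"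
  unfolding det_def cpm_def
  by (simp add: poly_sum poly_prod mat_def of_int_poly if_distrib[of "\<lambda>q. poly q c"] cong: if_cong)

lemma coeff_det_cpm: "coeff (det (cpm (B::complex^'n^'n))) CARD('n) = (-1) ^ CARD('n)"
proof -
  let ?M = "cpm B"
  let ?f = "\<lambda>p. of_int (sign p) * (\<Prod>i\<in>UNIV. ?M $ i $ p i)"
  have deg: "degree (?M $ i $ j) \<le> (if i = j then 1 else 0)" for i j
    by (auto simp: cpm_def degree_add_le)
  have other: "coeff (?f p) CARD('n) = 0" if "p permutes UNIV" "p \<noteq> id" for p
  proof -
    obtain k where k: "p k \<noteq> k" using \<open>p \<noteq> id\<close> by (metis eq_id_iff)
    have "degree (\<Prod>i\<in>UNIV. ?M $ i $ p i) \<le> (\<Sum>i\<in>UNIV. (if i = p i then 1 else 0::nat))"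
      by (rule order_trans[OF degree_prod_sum_le]) (auto intro!: sum_mono simp: deg)
    also have "\<dots> < (\<Sum>i\<in>(UNIV::'n set). 1::nat)"
      using k by (intro sum_strict_mono_ex1) (auto intro!: exI[of _ k])
    finally have "degree (\<Prod>i\<in>UNIV. ?M $ i $ p i) < CARD('n)" by simp
    then have "degree (?f p) < CARD('n)"
      by (metis (no_types) degree_mult_le le_less_trans add_0 degree_of_int)
    then show ?thesis by (simp add: coeff_eq_0)
  qed
  have lin: "?M $ i $ i = [:B $ i $ i, -1:]" for i
    by (simp add: cpm_def)
  have idt: "coeff (?f id) CARD('n) = (-1) ^ CARD('n)"
  proof -
    have nz: "?M $ i $ id i \<noteq> 0" for i by (simp add: lin)
    have "degree (\<Prod>i\<in>UNIV. ?M $ i $ id i) = CARD('n)"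
      by (subst degree_prod_sum_eq) (auto simp: lin)
    moreover have "lead_coeff (\<Prod>i\<in>UNIV. ?M $ i $ id i) = (-1) ^ CARD('n)"
      by (simp add: lead_coeff_prod lin)
    ultimately show ?thesis by (simp add: sign_id)
  qed
  have "det ?M = sum ?f {p. p permutes UNIV}" by (simp add: det_def)
  then have "coeff (det ?M) CARD('n) = (\<Sum>p\<in>{p. p permutes UNIV}. coeff (?f p) CARD('n))"
    by (simp add: coeff_sum)
  also have "\<dots> = coeff (?f id) CARD('n)"
  proof -
    have fin: "finite {p. p permutes (UNIV::'n set)}" by (simp add: finite_permutations)
    have "(\<Sum>p\<in>{p. p permutes UNIV}. coeff (?f p) CARD('n)) = coeff (?f id) CARD('n) + (\<Sum>p\<in>{p. p permutes UNIV} - {id}. coeff (?f p) CARD('n))"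
      by (rule sum.remove[OF fin]) (simp add: permutes_id)
    also have "(\<Sum>p\<in>{p. p permutes UNIV} - {id}. coeff (?f p) CARD('n)) = 0"
      by (rule sum.neutral) (auto intro: other)
    finally show ?thesis by simp
  qed
  finally show ?thesis using idt by simp
qed

lemma mat_c_mult: "mat c *v x = c *s (x::'a::comm_ring_1^'n)"
proof -
  have "(\<Sum>j\<in>UNIV. (if i = j then c else 0) * x $ j) = c * x $ i" for i
    by (simp add: if_distrib[of "\<lambda>u. u * x $ _"] cong: if_cong)
  then show ?thesis by (simp add: vec_eq_iff matrix_vector_mult_def mat_def)
qed

lemma eig_det: "c \<in> eigenvalues_c A \<longleftrightarrow> det (complexify A - mat c) = 0"
proof -
  let ?B = "complexify A - mat c"
  have "det ?B \<noteq> 0 \<longleftrightarrow> inj ((*v) ?B)"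
    using det_nz_iff_inj_gen[of "(*v) ?B"] by (simp add: matrix_of_matrix_vector_mul)
  also have "\<dots> \<longleftrightarrow> (\<forall>x. ?B *v x = 0 \<longrightarrow> x = 0)" by (rule vec.inj_iff_eq_0)
  finally show ?thesis
    by (auto simp: eigenvalues_c_def matrix_vector_mult_diff_rdistrib mat_c_mult)
qed

lemma eig_fin_ne: "finite (eigenvalues_c (A::real^'n^'n)) \<and> eigenvalues_c A \<noteq> {}"
proof -
  define P where "P = det (cpm (complexify A))"
  have ev: "eigenvalues_c A = {c. poly P c = 0}"
    by (simp add: set_eq_iff eig_det P_def poly_det_cpm)
  have co: "coeff P CARD('n) \<noteq> 0" by (simp add: P_def coeff_det_cpm)
  then have "P \<noteq> 0" by auto
  moreover have "degree P \<ge> CARD('n)" using co le_degree by blast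
  then have "0 < degree P" using order.strict_trans2 by fastforce
  ultimately show ?thesis unfolding ev
    using poly_roots_finite alg_closed_imp_poly_has_root by auto
qed

lemma complexify_mult: "complexify (A ** B) = complexify A ** complexify B"
  by (simp add: complexify_def matrix_matrix_mult_def vec_eq_iff)

lemma complexify_one: "complexify (mat 1) = mat 1"
  by (simp add: complexify_def mat_def vec_eq_iff)

lemma complexify_pow:
  assumes "complexify A *v z = l *s z"
  shows "complexify (matpow A t) *v z = l ^ t *s z"
proof (induction t)
  case 0 then show ?case by (simp add: complexify_one)
next
  case (Suc t)
  have "complexify (matpow A (Suc t)) *v z = complexify A *v (complexify (matpow A t) *v z)"
    by (simp add: complexify_mult matrix_vector_mul_assoc)
  also have "\<dots> = l ^ t *s (complexify A *v z)"
    by (simp add: Suc vec.scale)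
  finally show ?case by (simp add: assms)
qed

lemma entry_bound:
  fixes S :: "(real^'n) set" and U0 :: "(real^'n^'n) set"
  assumes S0inf_def: "S0inf = {x \<in> S. \<forall>A\<in>U0. \<forall>t::nat. t \<ge> 1 \<longrightarrow> matpow A t *v x \<in> S}"
    and "compact S"
    and "interior S0inf \<noteq> {}"
  obtains C where "\<And>A t k j. A \<in> U0 \<Longrightarrow> t \<ge> 1 \<Longrightarrow> \<bar>matpow A t $ k $ j\<bar> \<le> C"
proof -
  obtain M where M: "\<And>x. x \<in> S \<Longrightarrow> norm x \<le> M"
    using compact_imp_bounded[OF \<open>compact S\<close>] bounded_iff by blast
  obtain x0 where "x0 \<in> interior S0inf" using assms(3) by blast
  then obtain r where r: "r > 0" "ball x0 r \<subseteq> S0inf"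
    using mem_interior by blast
  have "\<bar>matpow A t $ k $ j\<bar> \<le> 4 * M / r" if A: "A \<in> U0" and t: "t \<ge> 1" for A t k j
  proof -
    let ?Q = "matpow A t"
    define y where "y = (r/2) *\<^sub>R (axis j 1 :: real^'n)"
    have ny: "norm y = r/2" using r by (simp add: y_def norm_axis_1)
    have "x0 \<in> S0inf" "x0 + y \<in> S0inf"
      using r ny by (auto intro!: subsetD[OF r(2)] simp: dist_norm)
    then have "?Q *v x0 \<in> S" "?Q *v (x0 + y) \<in> S"
      using A t unfolding S0inf_def by auto
    then have "norm (?Q *v (x0 + y) - ?Q *v x0) \<le> 2 * M"
      using M by (smt (verit) norm_triangle_ineq4)
    then have "norm (?Q *v y) \<le> 2 * M"
      by (simp add: matrix_vector_right_distrib)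
    moreover have "(?Q *v y) $ k = (r/2) * ?Q $ k $ j"
      by (simp add: y_def matrix_vector_mult_def axis_def if_distrib[of "\<lambda>u. _ * u"] cong: if_cong)
    ultimately have "\<bar>(r/2) * ?Q $ k $ j\<bar> \<le> 2 * M"
      by (metis component_le_norm_cart order_trans)
    then have "(r/2) * \<bar>?Q $ k $ j\<bar> \<le> 2 * M" using r by (simp add: abs_mult)
    then show ?thesis using r by (simp add: field_simps)
  qed
  then show ?thesis using that by blast
qed

theorem proposition15:
  fixes S :: "(real^'n) set"
    and V :: "nat \<Rightarrow> real^'n^'n" and v :: "nat \<Rightarrow> real" and s :: nat
    and U0 :: "(real^'n^'n) set" and S0inf :: "(real^'n) set"
  assumes "polyhedron S"
    and U0_def: "U0 = {A. \<forall>j\<in>{1..s}. trace (transpose (V j) ** A) \<le> v j}"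
    and S0inf_def: "S0inf = {x \<in> S. \<forall>A\<in>U0. \<forall>t::nat. t \<ge> 1 \<longrightarrow> matpow A t *v x \<in> S}"
    and "compact S"
    and "interior S0inf \<noteq> {}"
  shows "bounded U0 \<and> (\<forall>A\<in>U0. spectral_radius_r A \<le> 1)"
proof -
  obtain C where C: "\<And>A t k j. A \<in> U0 \<Longrightarrow> t \<ge> 1 \<Longrightarrow> \<bar>matpow A t $ k $ j\<bar> \<le> C"
    using entry_bound[OF S0inf_def assms(4,5)] by blast
  have bnd: "bounded U0"
    unfolding bounded_iff
  proof (intro exI ballI)
    fix A assume A: "A \<in> U0"
    have "norm A \<le> (\<Sum>k\<in>UNIV. norm (A $ k))"
      unfolding norm_vec_def by (rule L2_set_le_sum) auto
    also have "\<dots> \<le> (\<Sum>k\<in>(UNIV::'n set). \<Sum>j\<in>(UNIV::'n set). C)"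
    proof (rule sum_mono)
      fix k
      have "norm (A $ k) \<le> (\<Sum>j\<in>UNIV. \<bar>A $ k $ j\<bar>)" by (rule norm_le_l1_cart)
      also have "\<dots> \<le> (\<Sum>j\<in>(UNIV::'n set). C)"
        using C[OF A, of 1] by (intro sum_mono) (simp add: matrix_mul_rid)
      finally show "norm (A $ k) \<le> (\<Sum>j\<in>(UNIV::'n set). C)" .
    qed
    finally show "norm A \<le> (\<Sum>k\<in>(UNIV::'n set). \<Sum>j\<in>(UNIV::'n set). C)" .
  qed
  have "spectral_radius_r A \<le> 1" if A: "A \<in> U0" for A
  proof -
    have fe: "finite (eigenvalues_c A)" "eigenvalues_c A \<noteq> {}" using eig_fin_ne by auto
    have "cmod l \<le> 1" if l: "l \<in> eigenvalues_c A" for l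
    proof (rule ccontr)
      assume gt: "\<not> cmod l \<le> 1"
      obtain z where z: "z \<noteq> 0" "complexify A *v z = l *s z"
        using l by (auto simp: eigenvalues_c_def)
      obtain k where k: "z $ k \<noteq> 0" using z(1) by (metis vec_eq_iff zero_index)
      define D where "D = C * (\<Sum>j\<in>UNIV. cmod (z $ j))"
      have bound: "cmod l ^ t * cmod (z $ k) \<le> D" if t: "t \<ge> 1" for t
      proof -
        have "l ^ t * z $ k = (complexify (matpow A t) *v z) $ k"
          using complexify_pow[OF z(2), of t] by simp
        also have "\<dots> = (\<Sum>j\<in>UNIV. complex_of_real (matpow A t $ k $ j) * z $ j)"
          by (simp add: matrix_vector_mult_def complexify_def)
        finally have "cmod (l ^ t * z $ k) \<le> (\<Sum>j\<in>UNIV. cmod (complex_of_real (matpow A t $ k $ j) * z $ j))"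
          by (metis norm_sum)
        also have "\<dots> \<le> (\<Sum>j\<in>UNIV. C * cmod (z $ j))"
          by (intro sum_mono) (simp add: norm_mult mult_right_mono C[OF A t])
        finally show ?thesis by (simp add: D_def sum_distrib_left norm_mult norm_power)
      qed
      obtain n where n: "D / cmod (z $ k) < cmod l ^ n"
        using real_arch_pow gt by (metis not_le)
      have "1 * cmod l ^ n \<le> cmod l * cmod l ^ n" by (rule mult_right_mono) (use gt in auto)
      then have "cmod l ^ n \<le> cmod l ^ Suc n" by simp
      moreover have "D < cmod l ^ n * cmod (z $ k)"
        using n k by (simp add: divide_less_eq)
      ultimately have "D < cmod l ^ Suc n * cmod (z $ k)"
        using k by (smt (verit) mult_right_mono norm_ge_zero)
      with bound[of "Suc n"] show False by simp
    qed
    then show ?thesis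
      unfolding spectral_radius_r_def using fe by (simp add: Max_le_iff)
  qed
  with bnd show ?thesis by blast
qed

end
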